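(* Let $\kappa$ be a regular uncountable cardinal and $I$ an ideal on $\kappa$ with $NS_\kappa\subseteq I$. If $I$ is quasinormal, then $I$ is pleasant, and therefore $I$ is normal.
   Context: An ideal on $\kappa$ is a family of subsets of $\kappa$ closed under subsets and finite unions, which is $<\kappa$-complete and contains all singletons. $NS_\kappa$ is the ideal of nonstationary subsets of $\kappa$ (sets disjoint from some closed unbounded subset of $\kappa$). $I^*=\{\kappa\setminus X: X\in I\}$. For $A\subseteq\kappa$ and $X_\alpha\subseteq\kappa$, $\bigtriangledown_{\alpha\in A}X_\alpha=\{\xi<\kappa:\exists\alpha<\xi\,(\alpha\in A\wedge \xi\in X_\alpha)\}$. $I$ is normal if $X_\alpha\in I$ for all $\alpha<\kappa$ implies $\bigtriangledown_{\alpha<\kappa}X_\alpha\in I$. $I$ is pleasant if whenever $A\in I$ and $X_\alpha\in I$ for all $\alpha$, then $\bigtriangledown_{\alpha\in A}X_\alpha\in I$. $I$ is quasinormal if for every sequence $\langle X_\alpha\rangle_{\alpha<\kappa}$ of members of $I$ there is $Q\in I^*$ with $\bigtriangledown_{\alpha\in Q}X_\alpha\in I$. *)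

theory Defs
  imports Main
begin

text \<open>A cardinal kappa is represented as a cardinal well-order r (in the sense of
  BNF_Cardinal_Order_Relation); its field is the set of ordinals below kappa and
  (x,y) in r means x is at most y.\<close>

definition lt :: "'a rel \<Rightarrow> 'a \<Rightarrow> 'a \<Rightarrow> bool" where
  "lt r x y \<longleftrightarrow> (x, y) \<in> r \<and> x \<noteq> y"

definition ideal_on :: "'a rel \<Rightarrow> 'a set set \<Rightarrow> bool" where
  "ideal_on r I \<longleftrightarrow>
     I \<subseteq> Pow (Field r) \<and>
     (\<forall>X Y. X \<in> I \<and> Y \<subseteq> X \<longrightarrow> Y \<in> I) \<and>
     (\<forall>X Y. X \<in> I \<and> Y \<in> I \<longrightarrow> X \<union> Y \<in> I) \<and>
     (\<forall>F. F \<subseteq> I \<and> ordLess2 (card_of F) r \<longrightarrow> \<Union>F \<in> I) \<and>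
     (\<forall>\<alpha>\<in>Field r. {\<alpha>} \<in> I)"

definition unbounded :: "'a rel \<Rightarrow> 'a set \<Rightarrow> bool" where
  "unbounded r C \<longleftrightarrow> (\<forall>\<alpha>\<in>Field r. \<exists>\<beta>\<in>C. lt r \<alpha> \<beta>)"

definition closed_in :: "'a rel \<Rightarrow> 'a set \<Rightarrow> bool" where
  "closed_in r C \<longleftrightarrow>
     (\<forall>\<gamma>\<in>Field r. (\<exists>\<beta>\<in>C. lt r \<beta> \<gamma>) \<and>
        (\<forall>\<alpha>. lt r \<alpha> \<gamma> \<longrightarrow> (\<exists>\<beta>\<in>C. lt r \<alpha> \<beta> \<and> lt r \<beta> \<gamma>)) \<longrightarrow> \<gamma> \<in> C)"

definition club :: "'a rel \<Rightarrow> 'a set \<Rightarrow> bool" where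
  "club r C \<longleftrightarrow> C \<subseteq> Field r \<and> closed_in r C \<and> unbounded r C"

definition NS :: "'a rel \<Rightarrow> 'a set set" where
  "NS r = {X. X \<subseteq> Field r \<and> (\<exists>C. club r C \<and> X \<inter> C = {})}"

definition diag_union :: "'a rel \<Rightarrow> 'a set \<Rightarrow> ('a \<Rightarrow> 'a set) \<Rightarrow> 'a set" where
  "diag_union r A X = {\<xi> \<in> Field r. \<exists>\<alpha>. lt r \<alpha> \<xi> \<and> \<alpha> \<in> A \<and> \<xi> \<in> X \<alpha>}"

definition normal_ideal :: "'a rel \<Rightarrow> 'a set set \<Rightarrow> bool" where
  "normal_ideal r I \<longleftrightarrow>
     (\<forall>X. (\<forall>\<alpha>\<in>Field r. X \<alpha> \<in> I) \<longrightarrow> diag_union r (Field r) X \<in> I)"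

definition pleasant :: "'a rel \<Rightarrow> 'a set set \<Rightarrow> bool" where
  "pleasant r I \<longleftrightarrow>
     (\<forall>A X. A \<in> I \<and> (\<forall>\<alpha>\<in>Field r. X \<alpha> \<in> I) \<longrightarrow> diag_union r A X \<in> I)"

definition dual_filter :: "'a rel \<Rightarrow> 'a set set \<Rightarrow> 'a set set" where
  "dual_filter r I = {Field r - X | X. X \<in> I}"

definition quasinormal :: "'a rel \<Rightarrow> 'a set set \<Rightarrow> bool" where
  "quasinormal r I \<longleftrightarrow>
     (\<forall>X. (\<forall>\<alpha>\<in>Field r. X \<alpha> \<in> I) \<longrightarrow>
        (\<exists>Q\<in>dual_filter r I. diag_union r Q X \<in> I))"

end

theory Submission imports Defs begin
unbundle cardinal_syntax
lemma wo_facts: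
  assumes "Card_order r"
  shows "\<And>x. x \<in> Field r \<Longrightarrow> (x,x) \<in> r"
    and "\<And>x y z. (x,y) \<in> r \<Longrightarrow> (y,z) \<in> r \<Longrightarrow> (x,z) \<in> r"
    and "\<And>x y. (x,y) \<in> r \<Longrightarrow> (y,x) \<in> r \<Longrightarrow> x = y"
    and "\<And>x y. x \<in> Field r \<Longrightarrow> y \<in> Field r \<Longrightarrow> (x,y) \<in> r \<or> (y,x) \<in> r"
proof -
  have w: "wo_rel r" using assms Card_order_wo_rel by blast
  show "\<And>x. x \<in> Field r \<Longrightarrow> (x,x) \<in> r" using w wo_rel.REFL refl_on_def by fastforce
  show "\<And>x y z. (x,y) \<in> r \<Longrightarrow> (y,z) \<in> r \<Longrightarrow> (x,z) \<in> r" using w wo_rel.TRANS trans_def by fast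
  show "\<And>x y. (x,y) \<in> r \<Longrightarrow> (y,x) \<in> r \<Longrightarrow> x = y" using w wo_rel.ANTISYM antisym_def by fast
  show "\<And>x y. x \<in> Field r \<Longrightarrow> y \<in> Field r \<Longrightarrow> (x,y) \<in> r \<or> (y,x) \<in> r" using w wo_rel.TOTALS by fast
qed

lemma small_union:
  assumes "Card_order r" "ideal_on r I" "b \<in> Field r" "\<And>x. x \<in> S \<Longrightarrow> X x \<in> I" "S \<subseteq> underS r b"
  shows "\<Union>(X ` S) \<in> I"
proof -
  have "|X ` S| \<le>o |S|" by (rule card_of_image)
  also have "|S| \<le>o |underS r b|" using assms(5) by (rule card_of_mono1)
  also have "|underS r b| <o r" using assms(1,3) by (rule card_of_underS)
  finally have "|X ` S| <o r" .
  moreover have "X ` S \<subseteq> I" using assms(4) by blast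
  ultimately show ?thesis using assms(2) unfolding ideal_on_def by blast
qed

lemma lt_trans:
  assumes "Card_order r" "lt r x y" "lt r y z" shows "lt r x z"
  using assms wo_facts[OF assms(1)] unfolding lt_def by metis

lemma lt_le_trans:
  assumes "Card_order r" "lt r x y" "(y,z) \<in> r" shows "lt r x z"
  using assms wo_facts[OF assms(1)] unfolding lt_def by metis

lemma le_lt_trans:
  assumes "Card_order r" "(x,y) \<in> r" "lt r y z" shows "lt r x z"
  using assms wo_facts[OF assms(1)] unfolding lt_def by metis

lemma limpts_club:
  assumes cr: "Card_order r" and reg: "regularCard r" and unc: "natLeq <o r"
    and QF: "Q \<subseteq> Field r" and Qu: "unbounded r Q"
  shows "club r {\<gamma> \<in> Field r. \<forall>\<alpha>. lt r \<alpha> \<gamma> \<longrightarrow> (\<exists>\<beta>\<in>Q. lt r \<alpha> \<beta> \<and> lt r \<beta> \<gamma>)}"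
    (is "club r ?C")
proof -
  note wf = wo_facts[OF cr]
  have closed: "closed_in r ?C"
    unfolding closed_in_def
  proof (intro ballI impI)
    fix \<gamma> assume g: "\<gamma> \<in> Field r"
      and h: "(\<exists>\<beta>\<in>?C. lt r \<beta> \<gamma>) \<and> (\<forall>\<alpha>. lt r \<alpha> \<gamma> \<longrightarrow> (\<exists>\<beta>\<in>?C. lt r \<alpha> \<beta> \<and> lt r \<beta> \<gamma>))"
    show "\<gamma> \<in> ?C"
    proof (simp add: g, intro allI impI)
      fix \<alpha> assume a: "lt r \<alpha> \<gamma>"
      then obtain c where c: "c \<in> ?C" "lt r \<alpha> c" "lt r c \<gamma>" using h by blast
      then obtain \<beta> where "\<beta> \<in> Q" "lt r \<alpha> \<beta>" "lt r \<beta> c" by blast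
      thus "\<exists>\<beta>\<in>Q. lt r \<alpha> \<beta> \<and> lt r \<beta> \<gamma>" using c lt_trans[OF cr] by blast
    qed
  qed
  have unb: "unbounded r ?C"
    unfolding unbounded_def
  proof
    fix \<alpha>0 assume a0: "\<alpha>0 \<in> Field r"
    define nxt where "nxt = (\<lambda>\<alpha>. SOME \<beta>. \<beta> \<in> Q \<and> lt r \<alpha> \<beta>)"
    have nxt: "\<And>\<alpha>. \<alpha> \<in> Field r \<Longrightarrow> nxt \<alpha> \<in> Q \<and> lt r \<alpha> (nxt \<alpha>)"
    proof -
      fix \<alpha> assume "\<alpha> \<in> Field r"
      then have "\<exists>\<beta>. \<beta> \<in> Q \<and> lt r \<alpha> \<beta>" using Qu unfolding unbounded_def by blast
      thus "nxt \<alpha> \<in> Q \<and> lt r \<alpha> (nxt \<alpha>)" unfolding nxt_def by (rule someI_ex)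
    qed
    define s where "s = (\<lambda>n. (nxt ^^ n) \<alpha>0)"
    have sF: "\<And>n. s n \<in> Field r"
    proof -
      fix n show "s n \<in> Field r"
        by (induction n) (use a0 nxt QF in \<open>auto simp: s_def\<close>)
    qed
    have sS: "\<And>n. s (Suc n) = nxt (s n)" by (simp add: s_def)
    have sQ: "\<And>n. s (Suc n) \<in> Q" and slt: "\<And>n. lt r (s n) (s (Suc n))"
      using sS nxt sF by auto
    let ?K = "range s"
    have "|?K| \<le>o |UNIV :: nat set|" by (rule card_of_image)
    also have "|UNIV :: nat set| =o natLeq" by (rule card_of_nat)
    also have "natLeq <o r" by (rule unc)
    finally have Kl: "|?K| <o r" .
    have "\<not> cofinal ?K r"
    proof
      assume "cofinal ?K r"
      then have "|?K| =o r" using reg sF unfolding regularCard_def by blast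
      thus False using Kl not_ordLess_ordIso by blast
    qed
    then obtain a where aF: "a \<in> Field r" and ab: "\<forall>b\<in>?K. \<not>(a \<noteq> b \<and> (a,b) \<in> r)"
      unfolding cofinal_def by blast
    let ?U = "{u \<in> Field r. \<forall>n. (s n, u) \<in> r}"
    have aU: "a \<in> ?U"
    proof (simp add: aF, intro allI)
      fix n show "(s n, a) \<in> r" using ab wf(1,4) sF aF by (metis rangeI)
    qed
    have w: "wo_rel r" using cr Card_order_wo_rel by blast
    define g where "g = wo_rel.minim r ?U"
    have gU: "g \<in> ?U" unfolding g_def using wo_rel.minim_in[OF w, of ?U] aU by blast
    have gl: "\<And>u. u \<in> ?U \<Longrightarrow> (g,u) \<in> r" unfolding g_def
      using wo_rel.minim_least[OF w, of ?U] by blast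
    have "g \<in> ?C"
    proof (simp add: gU[THEN CollectD, THEN conjunct1], intro allI impI)
      fix \<alpha> assume a: "lt r \<alpha> g"
      have "\<alpha> \<notin> ?U"
      proof
        assume "\<alpha> \<in> ?U"
        then have "(g,\<alpha>) \<in> r" by (rule gl)
        thus False using a wf(3) unfolding lt_def by blast
      qed
      moreover have aF': "\<alpha> \<in> Field r" using a unfolding lt_def by (meson FieldI1)
      ultimately obtain n where n: "(s n, \<alpha>) \<notin> r" by blast
      have "lt r \<alpha> (s n)" using n wf(1,4) aF' sF unfolding lt_def by metis
      then have "lt r \<alpha> (s (Suc n))" using slt lt_trans[OF cr] by blast
      moreover have "lt r (s (Suc n)) g"
        using slt[of "Suc n"] gU lt_le_trans[OF cr] by blast
      ultimately show "\<exists>\<beta>\<in>Q. lt r \<alpha> \<beta> \<and> lt r \<beta> g" using sQ by blast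
    qed
    moreover have "lt r \<alpha>0 g"
    proof -
      have "lt r \<alpha>0 (s 1)" using slt[of 0] by (simp add: s_def)
      thus ?thesis using gU lt_le_trans[OF cr] by blast
    qed
    ultimately show "\<exists>\<beta>\<in>?C. lt r \<alpha>0 \<beta>" by blast
  qed
  show ?thesis unfolding club_def using closed unb by blast
qed

theorem theorem3p5:
  fixes r :: "'a rel" and I :: "'a set set"
  assumes "Card_order r" and "regularCard r" and "ordLess2 natLeq r"
    and "ideal_on r I" and "NS r \<subseteq> I"
    and "quasinormal r I"
  shows "pleasant r I \<and> normal_ideal r I"
proof -
  note cr = assms(1) and id = assms(4)
  note wf = wo_facts[OF cr]
  have sub: "\<And>X Y. X \<in> I \<Longrightarrow> Y \<subseteq> X \<Longrightarrow> Y \<in> I"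
    and un: "\<And>X Y. X \<in> I \<Longrightarrow> Y \<in> I \<Longrightarrow> X \<union> Y \<in> I"
    and sing: "\<And>a. a \<in> Field r \<Longrightarrow> {a} \<in> I"
    and pw: "\<And>X. X \<in> I \<Longrightarrow> X \<subseteq> Field r"
  proof -
    have c: "I \<subseteq> Pow (Field r)" "\<forall>X Y. X \<in> I \<and> Y \<subseteq> X \<longrightarrow> Y \<in> I"
      "\<forall>X Y. X \<in> I \<and> Y \<in> I \<longrightarrow> X \<union> Y \<in> I" "\<forall>\<alpha>\<in>Field r. {\<alpha>} \<in> I"
      using id unfolding ideal_on_def by simp_all
    show "\<And>X Y. X \<in> I \<Longrightarrow> Y \<subseteq> X \<Longrightarrow> Y \<in> I" using c(2) by blast
    show "\<And>X Y. X \<in> I \<Longrightarrow> Y \<in> I \<Longrightarrow> X \<union> Y \<in> I" using c(3) by blast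
    show "\<And>a. a \<in> Field r \<Longrightarrow> {a} \<in> I" using c(4) by blast
    show "\<And>X. X \<in> I \<Longrightarrow> X \<subseteq> Field r" using c(1) by blast
  qed
  have dF: "\<And>A X. diag_union r A X \<subseteq> Field r" unfolding diag_union_def by blast
  have pl: "pleasant r I"
    unfolding pleasant_def
  proof (intro allI impI)
    fix A X assume h: "A \<in> I \<and> (\<forall>\<alpha>\<in>Field r. X \<alpha> \<in> I)"
    have AF: "A \<subseteq> Field r" using h pw by blast
    define Z where "Z = (\<lambda>\<beta>. \<Union>(X ` (A \<inter> underS r \<beta>)))"
    have ZI: "\<forall>\<beta>\<in>Field r. Z \<beta> \<in> I"
    proof
      fix \<beta> assume b: "\<beta> \<in> Field r"
      show "Z \<beta> \<in> I" unfolding Z_def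
        by (rule small_union[OF cr id b]) (use h AF in auto)
    qed
    then obtain Q where Qd: "Q \<in> dual_filter r I" and QZ: "diag_union r Q Z \<in> I"
      using assms(6) unfolding quasinormal_def by blast
    then obtain Y where Y: "Y \<in> I" "Q = Field r - Y" unfolding dual_filter_def by blast
    have QF: "Q \<subseteq> Field r" using Y by blast
    show "diag_union r A X \<in> I"
    proof (cases "unbounded r Q")
      case True
      let ?C = "{\<gamma> \<in> Field r. \<forall>\<alpha>. lt r \<alpha> \<gamma> \<longrightarrow> (\<exists>\<beta>\<in>Q. lt r \<alpha> \<beta> \<and> lt r \<beta> \<gamma>)}"
      have cl: "club r ?C" by (rule limpts_club[OF cr assms(2,3) QF True])
      have "Field r - ?C \<in> NS r" unfolding NS_def using cl by blast
      then have CI: "Field r - ?C \<in> I" using assms(5) by blast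
      have "diag_union r A X \<subseteq> diag_union r Q Z \<union> (Field r - ?C)"
      proof
        fix \<xi> assume x: "\<xi> \<in> diag_union r A X"
        show "\<xi> \<in> diag_union r Q Z \<union> (Field r - ?C)"
        proof (cases "\<xi> \<in> ?C")
          case True
          from x obtain \<alpha> where a: "lt r \<alpha> \<xi>" "\<alpha> \<in> A" "\<xi> \<in> X \<alpha>" "\<xi> \<in> Field r"
            unfolding diag_union_def by blast
          then obtain \<beta> where b: "\<beta> \<in> Q" "lt r \<alpha> \<beta>" "lt r \<beta> \<xi>" using True by blast
          have "\<alpha> \<in> underS r \<beta>" using b(2) unfolding lt_def underS_def by blast
          then have "\<xi> \<in> Z \<beta>" unfolding Z_def using a by blast
          then show ?thesis using a b unfolding diag_union_def by blast
        next
          case False then show ?thesis using x dF[of A X] by blast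
        qed
      qed
      then show ?thesis by (rule sub[OF un[OF QZ CI]])
    next
      case False
      then obtain \<alpha> where a: "\<alpha> \<in> Field r" "\<forall>\<beta>\<in>Q. \<not> lt r \<alpha> \<beta>" unfolding unbounded_def by blast
      have uI: "underS r \<alpha> \<in> I"
      proof -
        have "\<Union>((\<lambda>x. {x}) ` underS r \<alpha>) \<in> I"
          by (rule small_union[OF cr id a(1)]) (simp_all add: sing[OF underS_Field])
        thus ?thesis by simp
      qed
      have "Field r \<subseteq> Y \<union> (underS r \<alpha> \<union> {\<alpha>})"
      proof
        fix x assume xF: "x \<in> Field r"
        show "x \<in> Y \<union> (underS r \<alpha> \<union> {\<alpha>})"
        proof (cases "x \<in> Y")
          case False
          then have "x \<in> Q" using Y xF by blast
          then have "\<not> lt r \<alpha> x" using a by blast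
          then have "x = \<alpha> \<or> (x,\<alpha>) \<in> r" using wf(4)[OF xF a(1)] unfolding lt_def by blast
          then show ?thesis unfolding underS_def by blast
        qed simp
      qed
      moreover have "Y \<union> (underS r \<alpha> \<union> {\<alpha>}) \<in> I" by (rule un[OF Y(1) un[OF uI sing[OF a(1)]]])
      ultimately have "Field r \<in> I" by (rule sub[rotated])
      then show ?thesis by (rule sub[OF _ dF])
    qed
  qed
  have "normal_ideal r I"
    unfolding normal_ideal_def
  proof (intro allI impI)
    fix X assume h: "\<forall>\<alpha>\<in>Field r. X \<alpha> \<in> I"
    then obtain Q where Qd: "Q \<in> dual_filter r I" and QX: "diag_union r Q X \<in> I"
      using assms(6) unfolding quasinormal_def by blast
    then obtain Y where Y: "Y \<in> I" "Q = Field r - Y" unfolding dual_filter_def by blast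
    have "diag_union r Y X \<in> I" using pl h Y(1) unfolding pleasant_def by blast
    moreover have "diag_union r (Field r) X \<subseteq> diag_union r Q X \<union> diag_union r Y X"
      using Y(2) unfolding diag_union_def by blast
    ultimately show "diag_union r (Field r) X \<in> I" by (rule sub[OF un[OF QX]])
  qed
  with pl show ?thesis by blast
qed
end
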